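(* Let $k\ge1$ and $D_k=3k^2+3k+1$. Let $\Delta_1,\Delta_2$ be two copies of $T_{D_k}$ compatible with $P_k$ (each being either $c+V(T_{D_k})$ or $c-V(T_{D_k})$ with $c\in P_k$) which share exactly one side and have disjoint interiors. Then the number of points of $P_k$ that are at distance at most $k$ in $T_\infty$ from both $\Delta_1$ and $\Delta_2$ (i.e., counted in the local counts of both copies) is $2k+2$.
   Context: Let $\alpha_1=(1,0)$ and $\alpha_2=(-\tfrac12,\tfrac{\sqrt3}{2})$. The triangular lattice $T_\infty$ is the infinite graph with vertex set $\{a\alpha_1+b\alpha_2 : a,b\in\mathbb Z\}$, two vertices being adjacent iff their Euclidean distance is $1$; distances are graph distances, and the distance from a point to a vertex set is the minimum distance to its elements (zero for points of the set). For $d\ge0$, $V(T_d)=\{a\alpha_1+b\alpha_2 : 0\le b\le a\le d\}$ and $-V(T_d)$ is its point reflection. For $k\ge 1$, let $D_k=3k^2+3k+1$ and let $P_k$ (the pattern $P_{k+1,1}$) be the sublattice $\{x\,u+y\,v : x,y\in\mathbb Z\}$, where $u=(2k+1)\alpha_1+k\alpha_2$ and $v=(k+1)\alpha_1+(2k+1)\alpha_2$. *)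

theory Defs
  imports "HOL-Analysis.Analysis"
begin

text \<open>A lattice point a*alpha1 + b*alpha2 is represented by its integer coordinates (a,b).\<close>
type_synonym tpt = "int \<times> int"

definition emb :: "tpt \<Rightarrow> real \<times> real" where
  "emb p = (real_of_int (fst p) - real_of_int (snd p) / 2, real_of_int (snd p) * sqrt 3 / 2)"

definition tadj :: "tpt \<Rightarrow> tpt \<Rightarrow> bool" where
  "tadj u v \<longleftrightarrow> dist (emb u) (emb v) = 1"

definition tsetdist :: "tpt \<Rightarrow> tpt set \<Rightarrow> nat" where
  "tsetdist x S = (LEAST n. \<exists>y\<in>S. (tadj ^^ n) x y)"

definition padd :: "tpt \<Rightarrow> tpt \<Rightarrow> tpt" where
  "padd c p = (fst c + fst p, snd c + snd p)"

definition psub :: "tpt \<Rightarrow> tpt \<Rightarrow> tpt" where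
  "psub c p = (fst c - fst p, snd c - snd p)"

definition VT :: "nat \<Rightarrow> tpt set" where
  "VT d = {(a, b). 0 \<le> b \<and> b \<le> a \<and> a \<le> int d}"

definition Dk :: "nat \<Rightarrow> nat" where
  "Dk k = 3 * k^2 + 3 * k + 1"

definition Pk :: "nat \<Rightarrow> tpt set" where
  "Pk k = {(x * (2 * int k + 1) + y * (int k + 1), x * int k + y * (2 * int k + 1)) | x y. True}"

definition tcopy :: "bool \<Rightarrow> tpt \<Rightarrow> nat \<Rightarrow> tpt set" where
  "tcopy s c d = (if s then padd c ` VT d else psub c ` VT d)"

definition tcorners :: "bool \<Rightarrow> tpt \<Rightarrow> nat \<Rightarrow> tpt set" where
  "tcorners s c d = (if s then {c, padd c (int d, 0), padd c (int d, int d)}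
                     else {c, psub c (int d, 0), psub c (int d, int d)})"

definition seg_pts :: "tpt \<Rightarrow> tpt \<Rightarrow> tpt set" where
  "seg_pts p q = {x. emb x \<in> closed_segment (emb p) (emb q)}"

definition tsides :: "bool \<Rightarrow> tpt \<Rightarrow> nat \<Rightarrow> tpt set set" where
  "tsides s c d = {seg_pts p q | p q. p \<in> tcorners s c d \<and> q \<in> tcorners s c d \<and> p \<noteq> q}"

definition tinterior :: "tpt set \<Rightarrow> (real \<times> real) set" where
  "tinterior S = interior (convex hull (emb ` S))"

end

theory Submission
  imports Defs
begin


definition hx :: "tpt \<Rightarrow> tpt \<Rightarrow> int" where
  "hx p q = max \<bar>fst p - fst q\<bar> (max \<bar>snd p - snd q\<bar> \<bar>(fst p - fst q) - (snd p - snd q)\<bar>)"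

lemma real_q:
  fixes x y r :: real
  assumes "r * r = 3"
  shows "(x - y/2)^2 + (y*r/2)^2 = x^2 - x*y + y^2"
proof -
  have "(y*r/2)^2 = y^2 * (r*r) / 4" by (simp add: power2_eq_square)
  also have "\<dots> = 3 * y^2 / 4" using assms by simp
  finally have "(y*r/2)^2 = 3 * y^2 / 4" .
  moreover have "(x - y/2)^2 = x^2 - x*y + y^2/4" by (simp add: power2_eq_square field_simps)
  ultimately show ?thesis by simp
qed

lemma emb_dist_sq:
  "(dist (emb u) (emb v))^2 = real_of_int ((fst u - fst v)^2 - (fst u - fst v)*(snd u - snd v) + (snd u - snd v)^2)"
proof -
  have s3: "sqrt 3 * sqrt 3 = (3::real)" by simp
  define x where "x = real_of_int (fst u - fst v)"
  define y where "y = real_of_int (snd u - snd v)"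
  have "(dist (emb u) (emb v))^2 = (x - y/2)^2 + (y * sqrt 3 / 2)^2"
    unfolding emb_def dist_Pair_Pair dist_real_def x_def y_def
    by (simp add: algebra_simps diff_divide_distrib)
  also have "\<dots> = x^2 - x*y + y^2" using real_q[OF s3] by simp
  finally show ?thesis unfolding x_def y_def by simp
qed

lemma int_q1:
  fixes x y :: int
  assumes "x^2 - x*y + y^2 = 1"
  shows "max \<bar>x\<bar> (max \<bar>y\<bar> \<bar>x - y\<bar>) = 1"
proof -
  have "(2*x - y)^2 + 3*y^2 = 4" using assms by (simp add: power2_eq_square algebra_simps)
  then have "3*y^2 \<le> 4" by (smt (verit) zero_le_power2[of "2*x - y"] zero_le_power2[of "2*y - x"])
  have "\<bar>y\<bar> \<le> 1"
  proof (rule ccontr)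
    assume "\<not> \<bar>y\<bar> \<le> 1"
    then have "2 \<le> \<bar>y\<bar>" by simp
    then have "2*2 \<le> \<bar>y\<bar>*\<bar>y\<bar>" using mult_mono[of 2 "\<bar>y\<bar>" 2 "\<bar>y\<bar>"] by simp
    then show False using \<open>3*y^2 \<le> 4\<close> by (simp add: power2_eq_square)
  qed
  then have "y = -1 \<or> y = 0 \<or> y = 1" by auto
  moreover have "\<bar>x\<bar> \<le> 1"
  proof -
    have "(2*y - x)^2 + 3*x^2 = 4" using assms by (simp add: power2_eq_square algebra_simps)
    then have "3*x^2 \<le> 4" by (smt (verit) zero_le_power2[of "2*x - y"] zero_le_power2[of "2*y - x"])
    show "\<bar>x\<bar> \<le> 1"
    proof (rule ccontr)
    assume "\<not> \<bar>x\<bar> \<le> 1"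
    then have "2 \<le> \<bar>x\<bar>" by simp
    then have "2*2 \<le> \<bar>x\<bar>*\<bar>x\<bar>" using mult_mono[of 2 "\<bar>x\<bar>" 2 "\<bar>x\<bar>"] by simp
    then show False using \<open>3*x^2 \<le> 4\<close> by (simp add: power2_eq_square)
  qed
  qed
  then have "x = -1 \<or> x = 0 \<or> x = 1" by auto
  ultimately show ?thesis using assms by (auto simp: power2_eq_square)
qed

lemma int_q2:
  fixes x y :: int
  assumes "max \<bar>x\<bar> (max \<bar>y\<bar> \<bar>x - y\<bar>) = 1"
  shows "x^2 - x*y + y^2 = 1"
proof -
  have "x = -1 \<or> x = 0 \<or> x = 1" "y = -1 \<or> y = 0 \<or> y = 1" using assms by auto
  then show ?thesis using assms by (auto simp: power2_eq_square)
qed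

lemma tadj_iff: "tadj u v \<longleftrightarrow> hx u v = 1"
proof -
  have "tadj u v \<longleftrightarrow> (dist (emb u) (emb v))^2 = 1"
    unfolding tadj_def by (metis abs_of_nonneg zero_le_dist power2_eq_1_iff one_power2 real_sqrt_abs real_sqrt_one power2_eq_square)
  also have "\<dots> \<longleftrightarrow> (fst u - fst v)^2 - (fst u - fst v)*(snd u - snd v) + (snd u - snd v)^2 = 1"
    unfolding emb_dist_sq by (metis of_int_eq_1_iff)
  also have "\<dots> \<longleftrightarrow> hx u v = 1"
    unfolding hx_def using int_q1 int_q2 by blast
  finally show ?thesis .
qed



lemma max3_le:
  fixes A B C A1 B1 C1 A2 B2 C2 :: int
  assumes "A \<le> A1 + A2" "B \<le> B1 + B2" "C \<le> C1 + C2"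
  shows "max A (max B C) \<le> max A1 (max B1 C1) + max A2 (max B2 C2)"
proof -
  have "A1 \<le> max A1 (max B1 C1)" "B1 \<le> max A1 (max B1 C1)" "C1 \<le> max A1 (max B1 C1)"
       "A2 \<le> max A2 (max B2 C2)" "B2 \<le> max A2 (max B2 C2)" "C2 \<le> max A2 (max B2 C2)" by auto
  then show ?thesis using assms unfolding max.bounded_iff by (intro conjI; linarith)
qed

lemma hx_tri: "hx x y \<le> hx x z + hx z y"
  unfolding hx_def by (rule max3_le; arith)

lemma hx_nonneg: "0 \<le> hx x y"
  unfolding hx_def by arith

lemma relpow_hx: "(tadj ^^ n) x y \<Longrightarrow> hx x y \<le> int n"
proof (induction n arbitrary: y)
  case 0
  then show ?case by (simp add: hx_def)
next
  case (Suc n)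
  from Suc.prems obtain z where "(tadj ^^ n) x z" "tadj z y" by (rule relpowp_Suc_E)
  then have "hx x z \<le> int n" "hx z y = 1" using Suc.IH tadj_iff by blast+
  then show ?case using hx_tri[of x y z] by simp
qed

definition hn :: "int \<Rightarrow> int \<Rightarrow> int" where "hn u v = max \<bar>u\<bar> (max \<bar>v\<bar> \<bar>u - v\<bar>)"

lemma hn_neg: "hn (-u) (-v) = hn u v" unfolding hn_def by (simp add: abs_minus_commute)

lemma hn_s1: assumes "0 < a" "0 < b" shows "hn (a-1) (b-1) = hn a b - 1"
proof -
  have c: "\<bar>a-b\<bar> \<le> max a b - 1" using assms by (auto simp: abs_if max_def)
  show ?thesis unfolding hn_def using assms c by (auto simp: max_def)
qed

lemma hn_s2: assumes "0 < a" "b \<le> 0" shows "hn (a-1) b = hn a b - 1"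
proof -
  have "\<bar>a - 1\<bar> = a - 1" "\<bar>b\<bar> = -b" "\<bar>a - 1 - b\<bar> = a - 1 - b" "\<bar>a\<bar> = a" "\<bar>a - b\<bar> = a - b"
    using assms by auto
  then show ?thesis unfolding hn_def using assms by (auto simp: max_def)
qed

lemma hn_s3: assumes "0 < a" "0 < b" shows "hn (-a+1) (-b+1) = hn (-a) (-b) - 1"
  using hn_s1[OF assms] hn_neg[of a b] hn_neg[of "a - 1" "b - 1"] by simp

lemma hn_s4: assumes "0 < a" "b \<le> 0" shows "hn (-a+1) (-b) = hn (-a) (-b) - 1"
  using hn_s2[OF assms] hn_neg[of a b] hn_neg[of "a - 1" "b"] by simp

lemma hn_s5: assumes "0 < b" shows "hn 0 (b - 1) = hn 0 b - 1"
  unfolding hn_def using assms by (auto simp: max_def)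

lemma hn_s6: assumes "b < 0" shows "hn 0 (b + 1) = hn 0 b - 1"
  unfolding hn_def using assms by (auto simp: max_def)


lemma hx_hn: "hx x y = hn (fst y - fst x) (snd y - snd x)"
proof -
  have e: "\<bar>a - b - (c - d)\<bar> = \<bar>b - a - (d - c)\<bar>" "\<bar>a - b\<bar> = \<bar>b - a\<bar>" for a b c d :: int by arith+
  show ?thesis unfolding hx_def hn_def by (simp only: e)
qed

lemma hx_unit: "max \<bar>e1\<bar> (max \<bar>e2\<bar> \<bar>e1 - e2\<bar>) = 1 \<Longrightarrow> hx x (fst x + e1, snd x + e2) = 1"
  unfolding hx_def by (simp add: abs_minus_commute[of e2 e1])

lemma step_exists:
  assumes "0 < hx x y"
  shows "\<exists>z. hx x z = 1 \<and> hx z y = hx x y - 1"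
proof -
  define a where "a = fst y - fst x"
  define b where "b = snd y - snd x"
  have hxy: "hx x y = hn a b" unfolding a_def b_def hx_hn ..
  have hz: "hx (fst x + e1, snd x + e2) y = hn (a - e1) (b - e2)" for e1 e2
    unfolding a_def b_def hx_hn by (simp add: algebra_simps)
  have H: "0 < hn a b" using assms hxy by simp
  consider "a > 0" "b > 0" | "a > 0" "b \<le> 0" | "a < 0" "b < 0" | "a < 0" "b \<ge> 0"
    | "a = 0" "b > 0" | "a = 0" "b < 0" | "a = 0" "b = 0" by linarith
  then show ?thesis
  proof cases
    case 1
    then show ?thesis using hx_unit[of 1 1 x] hz[of 1 1] hn_s1[of a b] hxy by (intro exI[of _ "(fst x + 1, snd x + 1)"]) simp
  next
    case 2
    then show ?thesis using hx_unit[of 1 0 x] hz[of 1 0] hn_s2[of a b] hxy by (intro exI[of _ "(fst x + 1, snd x + 0)"]) simp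
  next
    case 3
    then show ?thesis using hx_unit[of "-1" "-1" x] hz[of "-1" "-1"] hn_s3[of "-a" "-b"] hxy by (intro exI[of _ "(fst x + -1, snd x + -1)"]) simp
  next
    case 4
    then show ?thesis using hx_unit[of "-1" 0 x] hz[of "-1" 0] hn_s4[of "-a" "-b"] hxy by (intro exI[of _ "(fst x + -1, snd x + 0)"]) simp
  next
    case 5
    then show ?thesis using hx_unit[of 0 1 x] hz[of 0 1] hn_s5[of b] hxy by (intro exI[of _ "(fst x + 0, snd x + 1)"]) simp
  next
    case 6
    then show ?thesis using hx_unit[of 0 "-1" x] hz[of 0 "-1"] hn_s6[of b] hxy by (intro exI[of _ "(fst x + 0, snd x + -1)"]) simp
  next
    case 7
    then show ?thesis using H by (simp add: hn_def)
  qed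
qed

lemma path_exists: "hx x y = int m \<Longrightarrow> (tadj ^^ m) x y"
proof (induction m arbitrary: x)
  case 0
  then show ?case unfolding hx_def by (simp add: prod_eq_iff) arith
next
  case (Suc m)
  then obtain z where z: "hx x z = 1" "hx z y = hx x y - 1" using step_exists[of x y] by auto
  then have "(tadj ^^ m) z y" using Suc by simp
  moreover have "tadj x z" using z tadj_iff by simp
  ultimately show ?case using relpowp_Suc_I2[of tadj x z m y] by blast
qed

lemma tsetdist_le:
  assumes "S \<noteq> {}"
  shows "tsetdist p S \<le> k \<longleftrightarrow> (\<exists>y\<in>S. hx p y \<le> int k)"
proof
  assume A: "tsetdist p S \<le> k"
  obtain y0 where "y0 \<in> S" using assms by auto
  then have "\<exists>n. \<exists>y\<in>S. (tadj ^^ n) p y"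
    using path_exists[of p y0 "nat (hx p y0)"] hx_nonneg[of p y0] by auto
  then have "\<exists>y\<in>S. (tadj ^^ (tsetdist p S)) p y"
    unfolding tsetdist_def by (rule LeastI_ex)
  then obtain y where "y \<in> S" "(tadj ^^ (tsetdist p S)) p y" by blast
  moreover have "hx p y \<le> int (tsetdist p S)" using relpow_hx \<open>(tadj ^^ (tsetdist p S)) p y\<close> by blast
  moreover have "int (tsetdist p S) \<le> int k" using A by simp
  ultimately show "\<exists>y\<in>S. hx p y \<le> int k" by force
next
  assume "\<exists>y\<in>S. hx p y \<le> int k"
  then obtain y where y: "y \<in> S" "hx p y \<le> int k" by blast
  then have "(tadj ^^ (nat (hx p y))) p y" using path_exists[of p y "nat (hx p y)"] hx_nonneg[of p y] by auto
  then have "tsetdist p S \<le> nat (hx p y)" unfolding tsetdist_def using y(1) Least_le[of "\<lambda>n. \<exists>y\<in>S. (tadj ^^ n) p y"] by blast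
  then show "tsetdist p S \<le> k" using y(2) by linarith
qed

definition nearU :: "int \<Rightarrow> int \<Rightarrow> tpt \<Rightarrow> bool" where
  "nearU D k q \<longleftrightarrow> -k \<le> snd q \<and> snd q \<le> D + k \<and> -k \<le> fst q \<and> fst q \<le> D + k
     \<and> -k \<le> fst q - snd q \<and> fst q - snd q \<le> D + k"

lemma clampw:
  fixes a b k D :: int
  assumes N': "-k \<le> b" "b \<le> D + k" "-k \<le> a" "a \<le> D + k" "-k \<le> a - b" "a - b \<le> D + k" "0 \<le> k" "0 \<le> D"
  defines "yb \<equiv> max 0 (min b D)"
  defines "ya \<equiv> max yb (min a D)"
  shows "\<bar>a - ya\<bar> \<le> k \<and> \<bar>b - yb\<bar> \<le> k \<and> \<bar>(a - ya) - (b - yb)\<bar> \<le> k"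
proof -
  have ybv: "yb = (if b < 0 then 0 else if b \<le> D then b else D)" unfolding yb_def using N' by (auto simp: max_def min_def)
  then have "0 \<le> yb" "yb \<le> D" using N' by auto
  then have yav: "ya = (if a < yb then yb else if a \<le> D then a else D)" unfolding ya_def by (auto simp: max_def min_def)
  show ?thesis using ybv yav N' by (auto simp: abs_le_iff split: if_splits)
qed

lemma near_VT: assumes k0: "0 \<le> k" shows "(\<exists>y\<in>VT D. hx q y \<le> k) \<longleftrightarrow> nearU (int D) k q"
proof
  assume "\<exists>y\<in>VT D. hx q y \<le> k"
  then obtain y where "y \<in> VT D" "hx q y \<le> k" by blast
  moreover obtain y1 y2 where y: "y = (y1, y2)" by (rule prod.exhaust)
  moreover obtain a b where q: "q = (a, b)" by (rule prod.exhaust)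
  ultimately have "0 \<le> y2" "y2 \<le> y1" "y1 \<le> int D" "\<bar>a - y1\<bar> \<le> k" "\<bar>b - y2\<bar> \<le> k" "\<bar>(a - y1) - (b - y2)\<bar> \<le> k"
    unfolding VT_def hx_def by auto
  then show "nearU (int D) k q"
    unfolding nearU_def q by (simp add: abs_le_iff)
next
  assume N: "nearU (int D) k q"
  obtain a b where q: "q = (a, b)" by (rule prod.exhaust)
  define yb where "yb = max 0 (min b (int D))"
  define ya where "ya = max yb (min a (int D))"
  have "(ya, yb) \<in> VT D" unfolding VT_def ya_def yb_def by auto
  moreover have "hx q (ya, yb) \<le> k"
  proof -
    have N': "-k \<le> b" "b \<le> int D + k" "-k \<le> a" "a \<le> int D + k" "-k \<le> a - b" "a - b \<le> int D + k"
      using N unfolding nearU_def q by auto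
    have "\<bar>a - ya\<bar> \<le> k \<and> \<bar>b - yb\<bar> \<le> k \<and> \<bar>(a - ya) - (b - yb)\<bar> \<le> k"
      unfolding ya_def yb_def by (rule clampw) (use N' k0 in auto)
    then show ?thesis unfolding q hx_def by simp
  qed
  ultimately show "\<exists>y\<in>VT D. hx q y \<le> k" by blast
qed

lemma hx_padd: "hx p (padd c y) = hx (psub p c) y"
  unfolding hx_def padd_def psub_def by (simp add: algebra_simps)

lemma hx_psub: "hx p (psub c y) = hx (psub c p) y"
proof -
  have "hx p (psub c y) = hn (-(fst y - (fst c - fst p))) (-(snd y - (snd c - snd p)))"
    unfolding hx_hn psub_def by (simp add: algebra_simps)
  also have "\<dots> = hx (psub c p) y" unfolding hn_neg hx_hn psub_def by simp
  finally show ?thesis .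
qed

lemma near_up: assumes "0 \<le> k" shows
  "(\<exists>y\<in>tcopy True c D. hx p y \<le> k) \<longleftrightarrow> nearU (int D) k (psub p c)"
proof -
  have "(\<exists>y\<in>tcopy True c D. hx p y \<le> k) \<longleftrightarrow> (\<exists>y\<in>VT D. hx (psub p c) y \<le> k)"
    unfolding tcopy_def by (simp add: hx_padd)
  then show ?thesis using near_VT assms by simp
qed

lemma near_down: assumes "0 \<le> k" shows
  "(\<exists>y\<in>tcopy False c D. hx p y \<le> k) \<longleftrightarrow> nearU (int D) k (psub c p)"
proof -
  have "(\<exists>y\<in>tcopy False c D. hx p y \<le> k) \<longleftrightarrow> (\<exists>y\<in>VT D. hx (psub c p) y \<le> k)"
    unfolding tcopy_def by (simp add: hx_psub)
  then show ?thesis using near_VT assms by simp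
qed

lemma tcopy_ne: "tcopy s c D \<noteq> {}"
proof -
  have "(0,0) \<in> VT D" unfolding VT_def by auto
  then show ?thesis unfolding tcopy_def by auto
qed

lemma tsetdist_up: "tsetdist p (tcopy True c D) \<le> k \<longleftrightarrow> nearU (int D) (int k) (psub p c)"
  using tsetdist_le[OF tcopy_ne] near_up[of "int k"] by simp

lemma tsetdist_down: "tsetdist p (tcopy False c D) \<le> k \<longleftrightarrow> nearU (int D) (int k) (psub c p)"
  using tsetdist_le[OF tcopy_ne] near_down[of "int k"] by simp



lemma emb_inj: "emb p = emb q \<Longrightarrow> p = q"
proof -
  assume E: "emb p = emb q"
  then have "real_of_int (snd p) * sqrt 3 / 2 = real_of_int (snd q) * sqrt 3 / 2"
    unfolding emb_def by simp
  then have s: "snd p = snd q" by simp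
  with E have "real_of_int (fst p) = real_of_int (fst q)" unfolding emb_def by simp
  then have "fst p = fst q" by simp
  with s show "p = q" by (simp add: prod_eq_iff)
qed

lemma seg_pts_eq:
  assumes "seg_pts p q = seg_pts p' q'"
  shows "{p, q} = {p', q'}"
proof -
  have in1: "p \<in> seg_pts p' q'" "q \<in> seg_pts p' q'" using assms unfolding seg_pts_def by auto
  have in2: "p' \<in> seg_pts p q" "q' \<in> seg_pts p q" using assms unfolding seg_pts_def by auto
  have "closed_segment (emb p) (emb q) \<subseteq> closed_segment (emb p') (emb q')"
    using in1 unfolding seg_pts_def by (intro closed_segment_subset convex_closed_segment) auto
  moreover have "closed_segment (emb p') (emb q') \<subseteq> closed_segment (emb p) (emb q)"
    using in2 unfolding seg_pts_def by (intro closed_segment_subset convex_closed_segment) auto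
  ultimately have "closed_segment (emb p) (emb q) = closed_segment (emb p') (emb q')" by blast
  then have E: "{emb p, emb q} = {emb p', emb q'}" by simp
  have "inj emb" by (rule injI) (rule emb_inj)
  have "emb ` {p, q} = emb ` {p', q'}" using E by (simp only: image_insert image_empty)
  then show ?thesis using \<open>inj emb\<close> by (simp only: inj_image_eq_iff)
qed

lemma shared_corners:
  assumes "tsides s1 c1 D \<inter> tsides s2 c2 D \<noteq> {}"
  shows "\<exists>p q. p \<noteq> q \<and> p \<in> tcorners s1 c1 D \<and> q \<in> tcorners s1 c1 D
             \<and> p \<in> tcorners s2 c2 D \<and> q \<in> tcorners s2 c2 D"
proof -
  from assms obtain p q p' q' where
    pq: "p \<in> tcorners s1 c1 D" "q \<in> tcorners s1 c1 D" "p \<noteq> q"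
    and pq': "p' \<in> tcorners s2 c2 D" "q' \<in> tcorners s2 c2 D" "p' \<noteq> q'"
    and E: "seg_pts p q = seg_pts p' q'"
    unfolding tsides_def by blast
  from seg_pts_eq[OF E] have "{p, q} = {p', q'}" .
  then have "(p = p' \<and> q = q') \<or> (p = q' \<and> q = p')" by (auto simp: doubleton_eq_iff)
  then show ?thesis using pq pq' by blast
qed

lemma uu:
  fixes D a1 b1 a2 b2 :: int
  assumes "0 < D" "p \<noteq> q"
   "p \<in> {(a1,b1),(a1+D,b1+0),(a1+D,b1+D)}" "q \<in> {(a1,b1),(a1+D,b1+0),(a1+D,b1+D)}"
   "p \<in> {(a2,b2),(a2+D,b2+0),(a2+D,b2+D)}" "q \<in> {(a2,b2),(a2+D,b2+0),(a2+D,b2+D)}"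
  shows "a1 = a2 \<and> b1 = b2"
  using assms(3-6) apply (elim insertE emptyE)
  using assms(1,2) by (simp_all, linarith?)
lemma ud:
  fixes D a1 b1 a2 b2 :: int
  assumes "0 < D" "p \<noteq> q"
   "p \<in> {(a1,b1),(a1+D,b1+0),(a1+D,b1+D)}" "q \<in> {(a1,b1),(a1+D,b1+0),(a1+D,b1+D)}"
   "p \<in> {(a2,b2),(a2-D,b2-0),(a2-D,b2-D)}" "q \<in> {(a2,b2),(a2-D,b2-0),(a2-D,b2-D)}"
  shows "(a2 - a1, b2 - b1) \<in> {(D, 0), (D, D), (2*D, D)}"
  using assms(3-6) apply (elim insertE emptyE)
  using assms(1,2) by (simp_all, linarith?)
lemma dd:
  fixes D a1 b1 a2 b2 :: int
  assumes "0 < D" "p \<noteq> q"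
   "p \<in> {(a1,b1),(a1-D,b1-0),(a1-D,b1-D)}" "q \<in> {(a1,b1),(a1-D,b1-0),(a1-D,b1-D)}"
   "p \<in> {(a2,b2),(a2-D,b2-0),(a2-D,b2-D)}" "q \<in> {(a2,b2),(a2-D,b2-0),(a2-D,b2-D)}"
  shows "a1 = a2 \<and> b1 = b2"
  using assms(3-6) apply (elim insertE emptyE)
  using assms(1,2) by (simp_all, linarith?)

lemma corners_up: "tcorners True (a, b) D = {(a,b),(a+int D,b+0),(a+int D,b+int D)}"
  unfolding tcorners_def padd_def by simp
lemma corners_down: "tcorners False (a, b) D = {(a,b),(a-int D,b-0),(a-int D,b-int D)}"
  unfolding tcorners_def psub_def by simp

lemma config:
  assumes "0 < D"
    and "p \<noteq> q" "p \<in> tcorners s1 c1 D" "q \<in> tcorners s1 c1 D"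
    "p \<in> tcorners s2 c2 D" "q \<in> tcorners s2 c2 D"
  shows "(s1 = s2 \<and> c1 = c2)
     \<or> (s1 \<and> \<not> s2 \<and> psub c2 c1 \<in> {(int D, 0), (int D, int D), (2 * int D, int D)})
     \<or> (\<not> s1 \<and> s2 \<and> psub c1 c2 \<in> {(int D, 0), (int D, int D), (2 * int D, int D)})"
proof -
  obtain a1 b1 where c1: "c1 = (a1, b1)" by (rule prod.exhaust)
  obtain a2 b2 where c2: "c2 = (a2, b2)" by (rule prod.exhaust)
  have D0: "0 < int D" using assms(1) by simp
  show ?thesis
  proof (cases s1; cases s2)
    assume "s1" "s2"
    then show ?thesis using uu[OF D0 assms(2)] assms(3-6) unfolding c1 c2 by (simp add: corners_up)
  next
    assume "s1" "\<not> s2"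
    then show ?thesis using ud[OF D0 assms(2)] assms(3-6) unfolding c1 c2 psub_def by (simp add: corners_up corners_down)
  next
    assume "\<not> s1" "s2"
    then show ?thesis using ud[OF D0 assms(2), of a2 b2 a1 b1] assms(3-6) unfolding c1 c2 psub_def by (simp add: corners_up corners_down)
  next
    assume "\<not> s1" "\<not> s2"
    then show ?thesis using dd[OF D0 assms(2)] assms(3-6) unfolding c1 c2 by (simp add: corners_down)
  qed
qed

lemma tsides_card:
  assumes "0 < D"
  shows "card (tsides s c D) \<noteq> 1"
proof
  assume "card (tsides s c D) = 1"
  then obtain X where X: "tsides s c D = {X}" by (rule card_1_singletonE)
  define A where "A = c"
  define B where "B = (if s then padd c (int D, 0) else psub c (int D, 0))"
  define C where "C = (if s then padd c (int D, int D) else psub c (int D, int D))"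
  have cor: "A \<in> tcorners s c D" "B \<in> tcorners s c D" "C \<in> tcorners s c D"
    unfolding A_def B_def C_def tcorners_def by auto
  have ne: "A \<noteq> B" "A \<noteq> C" "B \<noteq> C" using assms
    unfolding A_def B_def C_def padd_def psub_def by (auto simp: prod_eq_iff)
  have "seg_pts A B \<in> tsides s c D" "seg_pts A C \<in> tsides s c D"
    unfolding tsides_def using cor ne by blast+
  then have "seg_pts A B = seg_pts A C" using X by blast
  then have "{A, B} = {A, C}" by (rule seg_pts_eq)
  then show False using ne by (auto simp: doubleton_eq_iff)
qed



lemma t01:
  fixes t D :: int
  assumes "0 < D" "-D < t*D" "t*D < 2*D"
  shows "t = 0 \<or> t = 1"
proof -
  have "-1 < t"
  proof (rule ccontr)
    assume "\<not> -1 < t"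
    then have "t*D \<le> (-1)*D" using assms(1) by (intro mult_right_mono) auto
    then show False using assms(2) by simp
  qed
  moreover have "t < 2"
  proof (rule ccontr)
    assume "\<not> t < 2"
    then have "2*D \<le> t*D" using assms(1) by (intro mult_right_mono) auto
    then show False using assms(3) by simp
  qed
  ultimately show ?thesis by auto
qed

lemma card2:
  fixes K :: int
  assumes "0 \<le> K" "inj_on g0 {0..K}" "inj_on g1 {0..K}" "g0 ` {0..K} \<inter> g1 ` {0..K} = {}"
  shows "card (g0 ` {0..K} \<union> g1 ` {0..K}) = 2 * nat K + 2"
proof -
  have "card (g0 ` {0..K} \<union> g1 ` {0..K}) = card (g0 ` {0..K}) + card (g1 ` {0..K})"
    using assms(4) by (intro card_Un_disjoint) auto
  also have "\<dots> = card {0..K} + card {0..K}"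
    using assms(2,3) by (simp add: card_image)
  also have "\<dots> = 2 * nat K + 2" using assms(1) by simp
  finally show ?thesis .
qed

lemma mb1: fixes c e K :: int assumes "0 \<le> c" "e \<le> K" shows "c*e \<le> c*K"
  using assms by (intro mult_left_mono) auto
lemma mb2: fixes c e K :: int assumes "0 \<le> c" "-K \<le> e" shows "c*(-K) \<le> c*e"
  using assms by (intro mult_left_mono) auto
lemma sb1: fixes c e :: int assumes "0 \<le> c" "1 \<le> e" shows "c \<le> c*e"
  using assms mult_left_mono[of 1 e c] by simp
lemma sb2: fixes c e :: int assumes "0 \<le> c" "e \<le> -1" shows "c*e \<le> -c"
  using assms mult_left_mono[of e "-1" c] by simp

lemma cfgA:
  fixes K :: int
  assumes K0: "0 \<le> K"
  defines "D \<equiv> 3*K*K + 3*K + 1"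
  shows "{q. (\<exists>t. fst q + (3*K+1)* snd q = t*D) \<and> nearU D K q \<and> nearU D K (psub (D,0) q)}
        = (\<lambda>i. ((3*K+1)*i, -i)) ` {0..K} \<union> (\<lambda>i. (D - (3*K+1)*i, i)) ` {0..K}"
proof (intro equalityI subsetI)
  have Dv: "D = 3*K*K + 3*K + 1" by (simp add: D_def)
  have KK: "0 \<le> K*K" by simp
  fix q assume qin: "q \<in> {q. (\<exists>t. fst q + (3*K+1)* snd q = t*D) \<and> nearU D K q \<and> nearU D K (psub (D,0) q)}"
  obtain a b where q: "q = (a, b)" by (rule prod.exhaust)
  from qin obtain t where ht: "a + (3*K+1)*b = t*D" and N: "nearU D K (a,b)" "nearU D K (D - a, - b)"
    unfolding q psub_def by auto
  from N have c: "-K \<le> b" "b \<le> K" "-K \<le> a" "a \<le> D + K" unfolding nearU_def by auto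
  have m1: "(3*K+1)*b \<le> (3*K+1)*K" using c K0 by (intro mult_left_mono) auto
  have m2: "(3*K+1)*(-K) \<le> (3*K+1)*b" using c K0 by (intro mult_left_mono) auto
  have e1: "(3*K+1)*K = 3*K*K + K" "(3*K+1)*(-K) = -(3*K*K) - K" by (simp_all add: algebra_simps)
  have "0 < D" "-D < t*D" "t*D < 2*D" using ht m1 m2 e1 K0 KK Dv c by linarith+
  then have "t = 0 \<or> t = 1" by (rule t01)
  then show "q \<in> (\<lambda>i. ((3*K+1)*i, -i)) ` {0..K} \<union> (\<lambda>i. (D - (3*K+1)*i, i)) ` {0..K}"
  proof
    assume t0: "t = 0"
    have "b \<le> 0"
    proof (rule ccontr)
      assume "\<not> b \<le> 0"
      then have "(3*K+1) \<le> (3*K+1)*b" using K0 by (intro sb1) auto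
      moreover have "a + (3*K+1) * b = 0" using ht t0 by simp
      ultimately show False using c K0 by linarith
    qed
    moreover have "a = (3*K+1)*(-b)" using ht t0 by simp
    ultimately have "q = (\<lambda>i. ((3*K+1)*i, -i)) (-b)" "-b \<in> {0..K}" using q c by auto
    then show ?thesis by blast
  next
    assume t1: "t = 1"
    have "0 \<le> b"
    proof (rule ccontr)
      assume "\<not> 0 \<le> b"
      then have "(3*K+1)*b \<le> -(3*K+1)" using K0 by (intro sb2) auto
      moreover have "a + (3*K+1) * b = D" using ht t1 by simp
      ultimately show False using c K0 by linarith
    qed
    moreover have "a = D - (3*K+1)*b" using ht t1 by simp
    ultimately have "q = (\<lambda>i. (D - (3*K+1)*i, i)) b" "b \<in> {0..K}" using q c by auto
    then show ?thesis by blast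
  qed
next
  have Dv: "D = 3*K*K + 3*K + 1" by (simp add: D_def)
  have KK: "0 \<le> K*K" by simp
  fix q assume "q \<in> (\<lambda>i. ((3*K+1)*i, -i)) ` {0..K} \<union> (\<lambda>i. (D - (3*K+1)*i, i)) ` {0..K}"
  then obtain i where i: "0 \<le> i" "i \<le> K"
    and qq: "q = ((3*K+1)*i, -i) \<or> q = (D - (3*K+1)*i, i)" by auto
  have m1: "(3*K+1)*i \<le> (3*K+1)*K" using i K0 by (intro mult_left_mono) auto
  have m0: "0 \<le> (3*K+1)*i" using i K0 by simp
  have e1: "(3*K+1)*K = 3*K*K + K" by (simp add: algebra_simps)
  from qq show "q \<in> {q. (\<exists>t. fst q + (3*K+1)* snd q = t*D) \<and> nearU D K q \<and> nearU D K (psub (D,0) q)}"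
  proof
    assume q: "q = ((3*K+1)*i, -i)"
    have "fst q + (3*K+1)* snd q = 0*D" unfolding q by simp
    moreover have "nearU D K q" "nearU D K (psub (D,0) q)"
      unfolding q nearU_def psub_def fst_conv snd_conv using i m1 m0 e1 Dv K0 KK by (intro conjI; linarith)+
    ultimately show ?thesis by blast
  next
    assume q: "q = (D - (3*K+1)*i, i)"
    have "fst q + (3*K+1)* snd q = 1*D" unfolding q by simp
    moreover have "nearU D K q" "nearU D K (psub (D,0) q)"
      unfolding q nearU_def psub_def fst_conv snd_conv using i m1 m0 e1 Dv K0 KK by (intro conjI; linarith)+
    ultimately show ?thesis by blast
  qed
qed


lemma cfgB:
  fixes K :: int
  assumes K0: "0 \<le> K"
  defines "D \<equiv> 3*K*K + 3*K + 1"
  shows "{q. (\<exists>t. fst q + (3*K+1) * snd q = t*D) \<and> nearU D K q \<and> nearU D K (psub (D,D) q)}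
        = (\<lambda>i. ((3*K+2)*i, (3*K+1)*i)) ` {0..K} \<union> (\<lambda>i. (D - (3*K+2)*i, D - (3*K+1)*i)) ` {0..K}"
proof (intro equalityI subsetI)
  have Dv: "D = 3*K*K + 3*K + 1" by (simp add: D_def)
  have KK: "0 \<le> K*K" by simp
  fix q assume qin: "q \<in> {q. (\<exists>t. fst q + (3*K+1) * snd q = t*D) \<and> nearU D K q \<and> nearU D K (psub (D,D) q)}"
  obtain a b where q: "q = (a, b)" by (rule prod.exhaust)
  from qin obtain t where ht: "a + (3*K+1) * b = t*D" and N: "nearU D K (a,b)" "nearU D K (D - a, D - b)"
    unfolding q psub_def by auto
  define e where "e = a - b"
  from N have c: "-K \<le> b" "b \<le> D + K" "-K \<le> e" "e \<le> K" unfolding nearU_def e_def by auto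
  define s where "s = 3*b - (3*K+1)*t"
  have "s*D = 3*b*D - (3*K+1)*(t*D)" by (simp add: s_def algebra_simps)
  also have "\<dots> = 3*b*D - (3*K+1)*(a + (3*K+1) * b)" using ht by simp
  also have "\<dots> = b - (3*K+1)*e" unfolding Dv e_def by (simp add: algebra_simps)
  finally have hs: "b - (3*K+1)*e = s*D" by simp
  have m1: "(3*K+1)*e \<le> (3*K+1)*K" using mb1 c K0 by simp
  have m2: "(3*K+1)*(-K) \<le> (3*K+1)*e" using mb2 c K0 by simp
  have e1: "(3*K+1)*K = 3*K*K + K" "(3*K+1)*(-K) = -(3*K*K) - K" by (simp_all add: algebra_simps)
  have ee: "(3*K+2)*e = (3*K+1)*e + e" by (simp add: algebra_simps)
  have "0 < D" "-D < s*D" "s*D < 2*D" using hs m1 m2 e1 K0 KK Dv c by linarith+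
  then have "s = 0 \<or> s = 1" by (rule t01)
  then show "q \<in> (\<lambda>i. ((3*K+2)*i, (3*K+1)*i)) ` {0..K} \<union> (\<lambda>i. (D - (3*K+2)*i, D - (3*K+1)*i)) ` {0..K}"
  proof
    assume s0: "s = 0"
    have "0 \<le> e"
    proof (rule ccontr)
      assume "\<not> 0 \<le> e"
      then have "(3*K+1)*e \<le> -(3*K+1)" using K0 by (intro sb2) auto
      moreover have "b - (3*K+1)*e = 0" using hs s0 by simp
      ultimately show False using c K0 by linarith
    qed
    moreover have "b = (3*K+1)*e" using hs s0 by simp
    moreover have "a = (3*K+2)*e" using calculation ee e_def by linarith
    ultimately have "q = (\<lambda>i. ((3*K+2)*i, (3*K+1)*i)) e" "e \<in> {0..K}" using q c by auto
    then show ?thesis by blast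
  next
    assume s1: "s = 1"
    have "e \<le> 0"
    proof (rule ccontr)
      assume "\<not> e \<le> 0"
      then have "(3*K+1) \<le> (3*K+1)*e" using K0 by (intro sb1) auto
      moreover have "b - (3*K+1)*e = D" using hs s1 by simp
      ultimately show False using c K0 by linarith
    qed
    moreover have "b = D - (3*K+1)*(-e)" using hs s1 by simp
    moreover have "(3*K+2)*(-e) = -((3*K+2)*e)" "(3*K+1)*(-e) = -((3*K+1)*e)" by simp_all
    moreover have "a = D - (3*K+2)*(-e)" using calculation ee e_def by linarith
    ultimately have "q = (\<lambda>i. (D - (3*K+2)*i, D - (3*K+1)*i)) (-e)" "-e \<in> {0..K}" using q c by auto
    then show ?thesis by blast
  qed
next
  have Dv: "D = 3*K*K + 3*K + 1" by (simp add: D_def)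
  have KK: "0 \<le> K*K" by simp
  fix q assume "q \<in> (\<lambda>i. ((3*K+2)*i, (3*K+1)*i)) ` {0..K} \<union> (\<lambda>i. (D - (3*K+2)*i, D - (3*K+1)*i)) ` {0..K}"
  then obtain i where i: "0 \<le> i" "i \<le> K"
    and qq: "q = ((3*K+2)*i, (3*K+1)*i) \<or> q = (D - (3*K+2)*i, D - (3*K+1)*i)" by auto
  have m1: "(3*K+1)*i \<le> (3*K+1)*K" using i K0 by (intro mult_left_mono) auto
  have m0: "0 \<le> (3*K+1)*i" using i K0 by simp
  have e1: "(3*K+1)*K = 3*K*K + K" by (simp add: algebra_simps)
  have ee: "(3*K+2)*i = (3*K+1)*i + i" by (simp add: algebra_simps)
  from qq show "q \<in> {q. (\<exists>t. fst q + (3*K+1) * snd q = t*D) \<and> nearU D K q \<and> nearU D K (psub (D,D) q)}"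
  proof
    assume q: "q = ((3*K+2)*i, (3*K+1)*i)"
    have "fst q + (3*K+1) * snd q = (3*i)*D" unfolding q Dv by (simp add: algebra_simps)
    moreover have "nearU D K q" "nearU D K (psub (D,D) q)"
      unfolding q nearU_def psub_def fst_conv snd_conv using i m1 m0 e1 ee Dv K0 KK by (intro conjI; linarith)+
    ultimately show ?thesis by blast
  next
    assume q: "q = (D - (3*K+2)*i, D - (3*K+1)*i)"
    have "fst q + (3*K+1) * snd q = (3*K+2-3*i)*D" unfolding q Dv by (simp add: algebra_simps)
    moreover have "nearU D K q" "nearU D K (psub (D,D) q)"
      unfolding q nearU_def psub_def fst_conv snd_conv using i m1 m0 e1 ee Dv K0 KK by (intro conjI; linarith)+
    ultimately show ?thesis by blast
  qed
qed

lemma cfgC: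
  fixes K :: int
  assumes K0: "0 \<le> K"
  defines "D \<equiv> 3*K*K + 3*K + 1"
  shows "{q. (\<exists>t. fst q + (3*K+1) * snd q = t*D) \<and> nearU D K q \<and> nearU D K (psub (2*D,D) q)}
        = (\<lambda>i. (D + i, (3*K+2)*i)) ` {0..K} \<union> (\<lambda>i. (D - i, D - (3*K+2)*i)) ` {0..K}"
proof (intro equalityI subsetI)
  have Dv: "D = 3*K*K + 3*K + 1" by (simp add: D_def)
  have KK: "0 \<le> K*K" by simp
  fix q assume qin: "q \<in> {q. (\<exists>t. fst q + (3*K+1) * snd q = t*D) \<and> nearU D K q \<and> nearU D K (psub (2*D,D) q)}"
  obtain a b where q: "q = (a, b)" by (rule prod.exhaust)
  from qin obtain t where ht: "a + (3*K+1) * b = t*D" and N: "nearU D K (a,b)" "nearU D K (2*D - a, D - b)"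
    unfolding q psub_def by auto
  define f where "f = a - D"
  from N have c: "-K \<le> b" "b \<le> D + K" "-K \<le> f" "f \<le> K" unfolding nearU_def f_def by auto
  define s where "s = 3*b - (3*K+2)*t + 3*K + 2"
  have "s*D = 3*b*D - (3*K+2)*(t*D) + (3*K+2)*D" by (simp add: s_def algebra_simps)
  also have "\<dots> = 3*b*D - (3*K+2)*(a + (3*K+1) * b) + (3*K+2)*D" using ht by simp
  also have "\<dots> = b - (3*K+2)*f" unfolding Dv f_def by (simp add: algebra_simps)
  finally have hs: "b - (3*K+2)*f = s*D" by simp
  have m1: "(3*K+2)*f \<le> (3*K+2)*K" using mb1 c K0 by simp
  have m2: "(3*K+2)*(-K) \<le> (3*K+2)*f" using mb2 c K0 by simp
  have e1: "(3*K+2)*K = 3*K*K + 2*K" "(3*K+2)*(-K) = -(3*K*K) - 2*K" by (simp_all add: algebra_simps)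
  have "0 < D" "-D < s*D" "s*D < 2*D" using hs m1 m2 e1 K0 KK Dv c by linarith+
  then have "s = 0 \<or> s = 1" by (rule t01)
  then show "q \<in> (\<lambda>i. (D + i, (3*K+2)*i)) ` {0..K} \<union> (\<lambda>i. (D - i, D - (3*K+2)*i)) ` {0..K}"
  proof
    assume s0: "s = 0"
    have "0 \<le> f"
    proof (rule ccontr)
      assume "\<not> 0 \<le> f"
      then have "(3*K+2)*f \<le> -(3*K+2)" using K0 by (intro sb2) auto
      moreover have "b - (3*K+2)*f = 0" using hs s0 by simp
      ultimately show False using c K0 by linarith
    qed
    moreover have "b = (3*K+2)*f" using hs s0 by simp
    moreover have "a = D + f" using f_def by simp
    ultimately have "q = (\<lambda>i. (D + i, (3*K+2)*i)) f" "f \<in> {0..K}" using q c by auto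
    then show ?thesis by blast
  next
    assume s1: "s = 1"
    have "f \<le> 0"
    proof (rule ccontr)
      assume "\<not> f \<le> 0"
      then have "(3*K+2) \<le> (3*K+2)*f" using K0 by (intro sb1) auto
      moreover have "b - (3*K+2)*f = D" using hs s1 by simp
      ultimately show False using c K0 by linarith
    qed
    moreover have "b = D - (3*K+2)*(-f)" using hs s1 by simp
    moreover have "a = D - (-f)" using f_def by simp
    ultimately have "q = (\<lambda>i. (D - i, D - (3*K+2)*i)) (-f)" "-f \<in> {0..K}" using q c by auto
    then show ?thesis by blast
  qed
next
  have Dv: "D = 3*K*K + 3*K + 1" by (simp add: D_def)
  have KK: "0 \<le> K*K" by simp
  fix q assume "q \<in> (\<lambda>i. (D + i, (3*K+2)*i)) ` {0..K} \<union> (\<lambda>i. (D - i, D - (3*K+2)*i)) ` {0..K}"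
  then obtain i where i: "0 \<le> i" "i \<le> K"
    and qq: "q = (D + i, (3*K+2)*i) \<or> q = (D - i, D - (3*K+2)*i)" by auto
  have m1: "(3*K+1)*i \<le> (3*K+1)*K" using i K0 by (intro mult_left_mono) auto
  have m0: "0 \<le> (3*K+1)*i" using i K0 by simp
  have e1: "(3*K+1)*K = 3*K*K + K" by (simp add: algebra_simps)
  have ee: "(3*K+2)*i = (3*K+1)*i + i" by (simp add: algebra_simps)
  from qq show "q \<in> {q. (\<exists>t. fst q + (3*K+1) * snd q = t*D) \<and> nearU D K q \<and> nearU D K (psub (2*D,D) q)}"
  proof
    assume q: "q = (D + i, (3*K+2)*i)"
    have "fst q + (3*K+1) * snd q = (1 + 3*i)*D" unfolding q Dv by (simp add: algebra_simps)
    moreover have "nearU D K q" "nearU D K (psub (2*D,D) q)"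
      unfolding q nearU_def psub_def fst_conv snd_conv using i m1 m0 e1 ee Dv K0 KK by (intro conjI; linarith)+
    ultimately show ?thesis by blast
  next
    assume q: "q = (D - i, D - (3*K+2)*i)"
    have "fst q + (3*K+1) * snd q = (3*K+2-3*i)*D" unfolding q Dv by (simp add: algebra_simps)
    moreover have "nearU D K q" "nearU D K (psub (2*D,D) q)"
      unfolding q nearU_def psub_def fst_conv snd_conv using i m1 m0 e1 ee Dv K0 KK by (intro conjI; linarith)+
    ultimately show ?thesis by blast
  qed
qed



lemma Pk_iff:
  fixes k :: nat
  defines "K \<equiv> int k"
  shows "q \<in> Pk k \<longleftrightarrow> (\<exists>t. fst q + (3*K+1) * snd q = t*(3*K*K + 3*K + 1))"
proof
  assume "q \<in> Pk k"
  then obtain x y where q: "q = (x * (2 * K + 1) + y * (K + 1), x * K + y * (2 * K + 1))"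
    unfolding Pk_def K_def by auto
  have "fst q + (3*K+1) * snd q = (x + 2*y)*(3*K*K + 3*K + 1)"
    unfolding q by (simp add: algebra_simps)
  then show "\<exists>t. fst q + (3*K+1) * snd q = t*(3*K*K + 3*K + 1)" by blast
next
  assume "\<exists>t. fst q + (3*K+1) * snd q = t*(3*K*K + 3*K + 1)"
  then obtain t where ht: "fst q + (3*K+1) * snd q = t*(3*K*K + 3*K + 1)" by blast
  define y where "y = snd q - K*t"
  define x where "x = t - 2*y"
  have a: "fst q = t*(3*K*K + 3*K + 1) - (3*K+1) * snd q" using ht by simp
  have "fst q = x * (2 * K + 1) + y * (K + 1)"
    unfolding a x_def y_def by (simp add: algebra_simps)
  moreover have "snd q = x * K + y * (2 * K + 1)"
    unfolding x_def y_def by (simp add: algebra_simps)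
  ultimately have "q = (x * (2 * K + 1) + y * (K + 1), x * K + y * (2 * K + 1))"
    by (simp add: prod_eq_iff)
  then show "q \<in> Pk k" unfolding Pk_def K_def by blast
qed

lemma shift_set:
  fixes K Dz :: int and c c' v :: tpt
  assumes c: "\<exists>t. fst c + (3*K+1) * snd c = t*Dz" and v: "psub c' c = v"
  shows "{p. (\<exists>t. fst p + (3*K+1) * snd p = t*Dz) \<and> nearU Dz K (psub p c) \<and> nearU Dz K (psub c' p)}
       = padd c ` {q. (\<exists>t. fst q + (3*K+1) * snd q = t*Dz) \<and> nearU Dz K q \<and> nearU Dz K (psub v q)}"
proof -
  from c obtain t1 where t1: "fst c + (3*K+1) * snd c = t1*Dz" by blast
  have lin1: "fst (psub p c) + (3*K+1) * snd (psub p c) = (fst p + (3*K+1) * snd p) - (fst c + (3*K+1) * snd c)" for p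
    by (simp add: psub_def algebra_simps)
  have lin2: "fst (padd c q) + (3*K+1) * snd (padd c q) = (fst q + (3*K+1) * snd q) + (fst c + (3*K+1) * snd c)" for q
    by (simp add: padd_def algebra_simps)
  have pv: "psub c' p = psub v (psub p c)" for p
    using v by (auto simp: psub_def)
  have pp: "padd c (psub p c) = p" for p by (simp add: padd_def psub_def)
  have pq: "psub (padd c q) c = q" for q by (simp add: padd_def psub_def)
  show ?thesis
  proof (intro equalityI subsetI)
    fix p assume "p \<in> {p. (\<exists>t. fst p + (3*K+1) * snd p = t*Dz) \<and> nearU Dz K (psub p c) \<and> nearU Dz K (psub c' p)}"
    then obtain tp where tp: "fst p + (3*K+1) * snd p = tp*Dz" and N: "nearU Dz K (psub p c)" "nearU Dz K (psub c' p)" by blast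
    have "fst (psub p c) + (3*K+1) * snd (psub p c) = (tp - t1)*Dz"
      unfolding lin1 tp t1 by (rule left_diff_distrib[symmetric])
    then have mem: "psub p c \<in> {q. (\<exists>t. fst q + (3*K+1) * snd q = t*Dz) \<and> nearU Dz K q \<and> nearU Dz K (psub v q)}"
    proof -
      have "nearU Dz K (psub v (psub p c))" using N(2) unfolding pv[of p] .
      then show ?thesis using N(1) \<open>fst (psub p c) + (3*K+1) * snd (psub p c) = (tp - t1)*Dz\<close>
        unfolding mem_Collect_eq by blast
    qed
    show "p \<in> padd c ` {q. (\<exists>t. fst q + (3*K+1) * snd q = t*Dz) \<and> nearU Dz K q \<and> nearU Dz K (psub v q)}"
      by (rule image_eqI[where f="padd c" and x="psub p c", OF pp[of p, symmetric] mem])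
  next
    fix p assume "p \<in> padd c ` {q. (\<exists>t. fst q + (3*K+1) * snd q = t*Dz) \<and> nearU Dz K q \<and> nearU Dz K (psub v q)}"
    then obtain q tq where p: "p = padd c q" and tq: "fst q + (3*K+1) * snd q = tq*Dz" and N: "nearU Dz K q" "nearU Dz K (psub v q)" by blast
    have "fst p + (3*K+1) * snd p = (tq + t1)*Dz"
      unfolding p lin2 tq t1 by (rule distrib_right[symmetric])
    moreover have "psub p c = q" using p pq by simp
    ultimately show "p \<in> {p. (\<exists>t. fst p + (3*K+1) * snd p = t*Dz) \<and> nearU Dz K (psub p c) \<and> nearU Dz K (psub c' p)}"
    proof -
      have "nearU Dz K (psub c' p)" unfolding pv[of p] \<open>psub p c = q\<close> by (rule N(2))
      then show ?thesis using N(1) \<open>psub p c = q\<close> \<open>fst p + (3*K+1) * snd p = (tq + t1)*Dz\<close>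
        unfolding mem_Collect_eq by blast
    qed
  qed
qed

lemma disjI2:
  fixes K :: int
  assumes "\<And>i j. 0 \<le> i \<Longrightarrow> i \<le> K \<Longrightarrow> 0 \<le> j \<Longrightarrow> j \<le> K \<Longrightarrow> g0 i = g1 j \<Longrightarrow> False"
  shows "g0 ` {0..K} \<inter> g1 ` {0..K} = {}"
  using assms by auto

lemma count_v:
  fixes K :: int
  assumes K0: "0 \<le> K"
  defines "Dz \<equiv> 3*K*K + 3*K + 1"
  assumes v: "v \<in> {(Dz, 0), (Dz, Dz), (2*Dz, Dz)}"
  shows "card {q. (\<exists>t. fst q + (3*K+1) * snd q = t*Dz) \<and> nearU Dz K q \<and> nearU Dz K (psub v q)} = 2 * nat K + 2"
proof -
  have Dpos: "0 < Dz" unfolding Dz_def using K0 by (simp add: add_pos_nonneg)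
  from v consider "v = (Dz, 0)" | "v = (Dz, Dz)" | "v = (2*Dz, Dz)" by blast
  then show ?thesis
  proof cases
    case 1
    show ?thesis unfolding 1 Dz_def cfgA[OF K0]
    proof (rule card2[OF K0])
      show "inj_on (\<lambda>i. ((3*K+1)*i, -i)) {0..K}" by (rule inj_onI) simp
      show "inj_on (\<lambda>i. (3*K*K + 3*K + 1 - (3*K+1)*i, i)) {0..K}" by (rule inj_onI) simp
      show "(\<lambda>i. ((3*K+1)*i, -i)) ` {0..K} \<inter> (\<lambda>i. (3*K*K + 3*K + 1 - (3*K+1)*i, i)) ` {0..K} = {}"
      proof (rule disjI2)
        fix i j :: int assume ij: "0 \<le> i" "i \<le> K" "0 \<le> j" "j \<le> K"
          and eq: "((3*K+1)*i, -i) = (3*K*K + 3*K + 1 - (3*K+1)*j, j)"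
        from eq obtain e1: "(3*K+1)*i = 3*K*K + 3*K + 1 - (3*K+1)*j" and e2: "-i = j" by (rule Pair_inject)
        from e2 ij have "i = 0" "j = 0" by linarith+
        then show False using e1 Dpos unfolding Dz_def by simp
      qed
    qed
  next
    case 2
    show ?thesis unfolding 2 Dz_def cfgB[OF K0]
    proof (rule card2[OF K0])
      show "inj_on (\<lambda>i. ((3*K+2)*i, (3*K+1)*i)) {0..K}"
      proof (rule inj_onI)
        fix x y assume "((3*K+2)*x, (3*K+1)*x) = ((3*K+2)*y, (3*K+1)*y)"
        then have "(3*K+2)*x = (3*K+2)*y" by simp
        then show "x = y" using K0 by simp
      qed
      show "inj_on (\<lambda>i. (3*K*K + 3*K + 1 - (3*K+2)*i, 3*K*K + 3*K + 1 - (3*K+1)*i)) {0..K}"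
      proof (rule inj_onI)
        fix x y assume "(3*K*K + 3*K + 1 - (3*K+2)*x, 3*K*K + 3*K + 1 - (3*K+1)*x) = (3*K*K + 3*K + 1 - (3*K+2)*y, 3*K*K + 3*K + 1 - (3*K+1)*y)"
        then have "(3*K+2)*x = (3*K+2)*y" by simp
        then show "x = y" using K0 by simp
      qed
      show "(\<lambda>i. ((3*K+2)*i, (3*K+1)*i)) ` {0..K} \<inter> (\<lambda>i. (3*K*K + 3*K + 1 - (3*K+2)*i, 3*K*K + 3*K + 1 - (3*K+1)*i)) ` {0..K} = {}"
      proof (rule disjI2)
        fix i j :: int assume ij: "0 \<le> i" "i \<le> K" "0 \<le> j" "j \<le> K"
          and eq: "((3*K+2)*i, (3*K+1)*i) = (3*K*K + 3*K + 1 - (3*K+2)*j, 3*K*K + 3*K + 1 - (3*K+1)*j)"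
        from eq obtain e1: "(3*K+2)*i = 3*K*K + 3*K + 1 - (3*K+2)*j"
          and e2: "(3*K+1)*i = 3*K*K + 3*K + 1 - (3*K+1)*j" by (rule Pair_inject)
        have "(3*K+2)*i + (3*K+2)*j - ((3*K+1)*i + (3*K+1)*j) = i + j" by (simp add: algebra_simps)
        then have "i + j = 0" using e1 e2 by linarith
        then have "i = 0" "j = 0" using ij by linarith+
        then show False using e1 Dpos unfolding Dz_def by simp
      qed
    qed
  next
    case 3
    show ?thesis unfolding 3 Dz_def cfgC[OF K0]
    proof (rule card2[OF K0])
      show "inj_on (\<lambda>i. (3*K*K + 3*K + 1 + i, (3*K+2)*i)) {0..K}" by (rule inj_onI) simp
      show "inj_on (\<lambda>i. (3*K*K + 3*K + 1 - i, 3*K*K + 3*K + 1 - (3*K+2)*i)) {0..K}" by (rule inj_onI) simp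
      show "(\<lambda>i. (3*K*K + 3*K + 1 + i, (3*K+2)*i)) ` {0..K} \<inter> (\<lambda>i. (3*K*K + 3*K + 1 - i, 3*K*K + 3*K + 1 - (3*K+2)*i)) ` {0..K} = {}"
      proof (rule disjI2)
        fix i j :: int assume ij: "0 \<le> i" "i \<le> K" "0 \<le> j" "j \<le> K"
          and eq: "(3*K*K + 3*K + 1 + i, (3*K+2)*i) = (3*K*K + 3*K + 1 - j, 3*K*K + 3*K + 1 - (3*K+2)*j)"
        from eq obtain e1: "3*K*K + 3*K + 1 + i = 3*K*K + 3*K + 1 - j"
          and e2: "(3*K+2)*i = 3*K*K + 3*K + 1 - (3*K+2)*j" by (rule Pair_inject)
        from e1 ij have "i = 0" "j = 0" by linarith+
        then show False using e2 Dpos unfolding Dz_def by simp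
      qed
    qed
  qed
qed


lemma padd_inj: "inj_on (padd c) A"
  by (rule inj_onI) (simp add: padd_def prod_eq_iff)

lemma count_main:
  fixes K :: int and c c' :: tpt
  assumes K0: "0 \<le> K"
  defines "Dz \<equiv> 3*K*K + 3*K + 1"
  assumes c: "\<exists>t. fst c + (3*K+1) * snd c = t*Dz"
    and v: "psub c' c \<in> {(Dz, 0), (Dz, Dz), (2*Dz, Dz)}"
  shows "card {p. (\<exists>t. fst p + (3*K+1) * snd p = t*Dz) \<and> nearU Dz K (psub p c) \<and> nearU Dz K (psub c' p)} = 2 * nat K + 2"
proof -
  have "card {p. (\<exists>t. fst p + (3*K+1) * snd p = t*Dz) \<and> nearU Dz K (psub p c) \<and> nearU Dz K (psub c' p)}
     = card (padd c ` {q. (\<exists>t. fst q + (3*K+1) * snd q = t*Dz) \<and> nearU Dz K q \<and> nearU Dz K (psub (psub c' c) q)})"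
    using shift_set[OF c refl] by simp
  also have "\<dots> = card {q. (\<exists>t. fst q + (3*K+1) * snd q = t*Dz) \<and> nearU Dz K q \<and> nearU Dz K (psub (psub c' c) q)}"
    by (rule card_image[OF padd_inj])
  also have "\<dots> = 2 * nat K + 2" unfolding Dz_def by (rule count_v[OF K0 v[unfolded Dz_def]])
  finally show ?thesis .
qed

theorem lemma2:
  fixes k :: nat and s1 s2 :: bool and c1 c2 :: tpt
  assumes "k \<ge> 1"
    and "c1 \<in> Pk k" and "c2 \<in> Pk k"
    and "card (tsides s1 c1 (Dk k) \<inter> tsides s2 c2 (Dk k)) = 1"
    and "tinterior (tcopy s1 c1 (Dk k)) \<inter> tinterior (tcopy s2 c2 (Dk k)) = {}"
  shows "card {p \<in> Pk k. tsetdist p (tcopy s1 c1 (Dk k)) \<le> k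
                       \<and> tsetdist p (tcopy s2 c2 (Dk k)) \<le> k} = 2 * k + 2"
proof -
  define K where "K = int k"
  define Dz where "Dz = 3*K*K + 3*K + 1"
  have K0: "0 \<le> K" unfolding K_def by simp
  have Kn: "nat K = k" unfolding K_def by simp
  have DD: "int (Dk k) = Dz" unfolding Dz_def K_def Dk_def by (simp add: power2_eq_square)
  have Dpos: "0 < Dk k" unfolding Dk_def by simp
  have PkI: "p \<in> Pk k \<longleftrightarrow> (\<exists>t. fst p + (3*K+1) * snd p = t*Dz)" for p
    unfolding Dz_def K_def by (rule Pk_iff)
  have ne: "tsides s1 c1 (Dk k) \<inter> tsides s2 c2 (Dk k) \<noteq> {}"
    using assms(4) by (metis card.empty zero_neq_one)
  obtain p q where pq: "p \<noteq> q" "p \<in> tcorners s1 c1 (Dk k)" "q \<in> tcorners s1 c1 (Dk k)"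
    "p \<in> tcorners s2 c2 (Dk k)" "q \<in> tcorners s2 c2 (Dk k)"
    using shared_corners[OF ne] by blast
  have cfg: "(s1 = s2 \<and> c1 = c2)
     \<or> (s1 \<and> \<not> s2 \<and> psub c2 c1 \<in> {(Dz, 0), (Dz, Dz), (2 * Dz, Dz)})
     \<or> (\<not> s1 \<and> s2 \<and> psub c1 c2 \<in> {(Dz, 0), (Dz, Dz), (2 * Dz, Dz)})"
    using config[OF Dpos pq] unfolding DD .
  let ?M = "{p \<in> Pk k. tsetdist p (tcopy s1 c1 (Dk k)) \<le> k \<and> tsetdist p (tcopy s2 c2 (Dk k)) \<le> k}"
  from cfg consider "s1 = s2 \<and> c1 = c2"
    | "s1" "\<not> s2" "psub c2 c1 \<in> {(Dz, 0), (Dz, Dz), (2 * Dz, Dz)}"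
    | "\<not> s1" "s2" "psub c1 c2 \<in> {(Dz, 0), (Dz, Dz), (2 * Dz, Dz)}" by blast
  then show ?thesis
  proof cases
    case 1
    then have "card (tsides s1 c1 (Dk k)) = 1" using assms(4) by simp
    then show ?thesis using tsides_card[OF Dpos] by blast
  next
    case 2
    have "?M = {p. (\<exists>t. fst p + (3*K+1) * snd p = t*Dz) \<and> nearU Dz K (psub p c1) \<and> nearU Dz K (psub c2 p)}"
      using 2 by (simp add: tsetdist_up tsetdist_down PkI DD K_def)
    also have "card \<dots> = 2 * nat K + 2"
      unfolding Dz_def by (rule count_main[OF K0]) (use 2 assms(2) PkI in \<open>simp_all add: Dz_def\<close>)
    finally show ?thesis using Kn by simp
  next
    case 3
    have "?M = {p. (\<exists>t. fst p + (3*K+1) * snd p = t*Dz) \<and> nearU Dz K (psub p c2) \<and> nearU Dz K (psub c1 p)}"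
      using 3 by (auto simp: tsetdist_up tsetdist_down PkI DD K_def)
    also have "card \<dots> = 2 * nat K + 2"
      unfolding Dz_def by (rule count_main[OF K0]) (use 3 assms(3) PkI in \<open>simp_all add: Dz_def\<close>)
    finally show ?thesis using Kn by simp
  qed
qed


end
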